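(* Let $G$ be a matrix with entries from a field $\mathbb{F}$, with row index set $S$ and column index set $T$. Suppose $S=S_1\cup\cdots\cup S_m$ and $T=T_1\cup\cdots\cup T_n$ are partitions into pairwise disjoint sets. Let $s_1,\dots,s_m,t_1,\dots,t_n$ be non-negative integers with $\sum_{i=1}^m s_i=\sum_{j=1}^n t_j=R$. Then there exist subsets $\mathbf{s}_1\subseteq S_1,\dots,\mathbf{s}_m\subseteq S_m$ and $\mathbf{t}_1\subseteq T_1,\dots,\mathbf{t}_n\subseteq T_n$ with $|\mathbf{s}_i|=s_i$ for all $i$ and $|\mathbf{t}_j|=t_j$ for all $j$ such that the $R\times R$ submatrix $G\big(\bigcup_{i=1}^m\mathbf{s}_i,\bigcup_{j=1}^n\mathbf{t}_j\big)$ is nonsingular, if and only if for every $I\subseteq\{1,\dots,m\}$ and every $K\subseteq\{1,\dots,n\}$, \[ \operatorname{rank}\Big(G\big(\textstyle\bigcup_{i\in I}S_i,\bigcup_{k\in K}T_k\big)\Big)\ \ge\ \sum_{i\in I}s_i+\sum_{k\in K}t_k-R . \]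
   Context: For $\mathbf{s}\subseteq S$ and $\mathbf{t}\subseteq T$, $G(\mathbf{s},\mathbf{t})$ denotes the submatrix of $G$ formed by the rows with indices in $\mathbf{s}$ and the columns with indices in $\mathbf{t}$ (the rank of a submatrix with no rows or no columns is $0$). *)

theory Defs
  imports Main
begin

text \<open>The submatrix G(A,B) is G restricted to
  rows in A and columns in B.\<close>

definition rows_lin_indep :: "('r \<Rightarrow> 'c \<Rightarrow> 'a::field) \<Rightarrow> 'r set \<Rightarrow> 'c set \<Rightarrow> bool" where
  "rows_lin_indep G A B \<longleftrightarrow> finite A \<and>
     (\<forall>c. (\<forall>j\<in>B. (\<Sum>i\<in>A. c i * G i j) = 0) \<longrightarrow> (\<forall>i\<in>A. c i = 0))"

text \<open>Rank of the submatrix G(A,B) (row rank: maximal number of linearly independent rows).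
  It is 0 when A or B is empty.\<close>
definition submatrix_rank :: "('r \<Rightarrow> 'c \<Rightarrow> 'a::field) \<Rightarrow> 'r set \<Rightarrow> 'c set \<Rightarrow> nat" where
  "submatrix_rank G A B = Max {card A' | A'. A' \<subseteq> A \<and> rows_lin_indep G A' B}"

definition nonsingular_submatrix :: "('r \<Rightarrow> 'c \<Rightarrow> 'a::field) \<Rightarrow> 'r set \<Rightarrow> 'c set \<Rightarrow> bool" where
  "nonsingular_submatrix G A B \<longleftrightarrow> finite A \<and> finite B \<and> card A = card B \<and>
     submatrix_rank G A B = card A"

end

theory Submission
  imports Defs "HOL-Library.Function_Algebras" HOL.Vector_Spaces
begin


definition fscale :: "'a::field \<Rightarrow> ('c \<Rightarrow> 'a) \<Rightarrow> ('c \<Rightarrow> 'a)" where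
  "fscale c f = (\<lambda>x. c * f x)"

interpretation fvs: vector_space "fscale :: 'a::field \<Rightarrow> ('c \<Rightarrow> 'a) \<Rightarrow> ('c \<Rightarrow> 'a)"
  by unfold_locales (auto simp: fscale_def fun_eq_iff algebra_simps)

lemma sum_fun_apply: "(sum f A) x = (\<Sum>a\<in>A. f a x)"
  by (induct A rule: infinite_finite_induct) auto

lemma indexed_indep:
  fixes v :: "'e \<Rightarrow> 'c \<Rightarrow> 'a::field"
  assumes "finite X"
  shows "(inj_on v X \<and> fvs.independent (v ` X)) \<longleftrightarrow>
         (\<forall>c. (\<Sum>x\<in>X. fscale (c x) (v x)) = 0 \<longrightarrow> (\<forall>x\<in>X. c x = 0))"
proof
  assume h: "inj_on v X \<and> fvs.independent (v ` X)"
  show "\<forall>c. (\<Sum>x\<in>X. fscale (c x) (v x)) = 0 \<longrightarrow> (\<forall>x\<in>X. c x = 0)"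
  proof (intro allI impI ballI)
    fix c x assume s: "(\<Sum>x\<in>X. fscale (c x) (v x)) = 0" and x: "x \<in> X"
    define u where "u = (\<lambda>w. c (the_inv_into X v w))"
    have "(\<Sum>w\<in>v ` X. fscale (u w) w) = (\<Sum>x\<in>X. fscale (u (v x)) (v x))"
      using h by (simp add: sum.reindex)
    also have "\<dots> = (\<Sum>x\<in>X. fscale (c x) (v x))"
      using h by (auto intro!: sum.cong simp: u_def the_inv_into_f_f)
    finally have "(\<Sum>w\<in>v ` X. fscale (u w) w) = 0" using s by simp
    hence "\<forall>w\<in>v`X. u w = 0" using h fvs.dependent_finite[of "v ` X"] assms by auto
    thus "c x = 0" using x h by (auto simp: u_def the_inv_into_f_f)
  qed
next
  assume h: "\<forall>c. (\<Sum>x\<in>X. fscale (c x) (v x)) = 0 \<longrightarrow> (\<forall>x\<in>X. c x = 0)"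
  have inj: "inj_on v X"
  proof (rule inj_onI, rule ccontr)
    fix x y assume xy: "x \<in> X" "y \<in> X" "v x = v y" "x \<noteq> y"
    define c where "c = (\<lambda>z. if z = x then (1::'a) else if z = y then -1 else 0)"
    have "(\<Sum>z\<in>X. fscale (c z) (v z)) = (\<Sum>z\<in>{x,y}. fscale (c z) (v z))"
      using assms xy by (intro sum.mono_neutral_right) (auto simp: c_def fscale_def fun_eq_iff)
    also have "\<dots> = 0" using xy by (simp add: c_def fscale_def fun_eq_iff)
    finally have "(\<Sum>z\<in>X. fscale (c z) (v z)) = 0" .
    hence "c x = 0" using h xy(1) by blast
    thus False by (simp add: c_def)
  qed
  moreover have "fvs.independent (v ` X)"
  proof
    assume "fvs.dependent (v ` X)"
    then obtain u where u: "\<exists>w\<in>v`X. u w \<noteq> 0" "(\<Sum>w\<in>v`X. fscale (u w) w) = 0"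
      using fvs.dependent_finite[of "v ` X"] assms by auto
    have "(\<Sum>x\<in>X. fscale (u (v x)) (v x)) = 0" using u inj by (simp add: sum.reindex)
    thus False using h u by auto
  qed
  ultimately show "inj_on v X \<and> fvs.independent (v ` X)" by simp
qed

definition lind :: "('e \<Rightarrow> 'c \<Rightarrow> 'a::field) \<Rightarrow> 'e set \<Rightarrow> bool" where
  "lind v X \<longleftrightarrow> finite X \<and> inj_on v X \<and> fvs.independent (v ` X)"

lemma lind_sub: "lind v Y \<Longrightarrow> X \<subseteq> Y \<Longrightarrow> lind v X"
  unfolding lind_def by (meson finite_subset fvs.independent_mono image_mono inj_on_subset)

lemma lind_aug:
  assumes I: "lind v I" and J: "lind v J" and c: "card I < card J"
  shows "\<exists>x\<in>J - I. lind v (insert x I)"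
proof (rule ccontr)
  assume na: "\<not> ?thesis"
  have "v ` J \<subseteq> fvs.span (v ` I)"
  proof
    fix w assume "w \<in> v ` J"
    then obtain x where x: "x \<in> J" "w = v x" by auto
    show "w \<in> fvs.span (v ` I)"
    proof (cases "x \<in> I")
      case True thus ?thesis using x by (auto intro: fvs.span_base)
    next
      case False
      hence nl: "\<not> lind v (insert x I)" using na x by auto
      show ?thesis
      proof (cases "v x \<in> v ` I")
        case True thus ?thesis using x by (auto intro: fvs.span_base)
      next
        case False
        have "finite (insert x I)" using I by (simp add: lind_def)
        moreover have "inj_on v (insert x I)" using I False by (auto simp: lind_def)
        ultimately have "\<not> fvs.independent (insert (v x) (v ` I))" using nl by (simp add: lind_def)
        thus ?thesis using I False x by (simp add: lind_def fvs.independent_insert)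
      qed
    qed
  qed
  hence "card (v ` J) \<le> card (v ` I)"
    using fvs.independent_span_bound[of "v ` I" "v ` J"] I J by (simp add: lind_def)
  thus False using I J c by (simp add: lind_def card_image)
qed

locale indsys =
  fixes E :: "'e set" and ind :: "'e set \<Rightarrow> bool"
  assumes fin: "finite E"
    and ind_E: "ind X \<Longrightarrow> X \<subseteq> E"
    and ind_empty: "ind {}"
    and ind_sub: "ind Y \<Longrightarrow> X \<subseteq> Y \<Longrightarrow> ind X"
    and aug: "ind I \<Longrightarrow> ind J \<Longrightarrow> card I < card J \<Longrightarrow> \<exists>x\<in>J - I. ind (insert x I)"
begin

definition rk :: "'e set \<Rightarrow> nat" where
  "rk X = Max {card Y | Y. Y \<subseteq> X \<and> ind Y}"

lemma rk_set_fin: "finite {card Y | Y. Y \<subseteq> X \<and> ind Y}"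
proof -
  have "{card Y | Y. Y \<subseteq> X \<and> ind Y} \<subseteq> card ` Pow E" using ind_E by auto
  thus ?thesis using fin by (meson finite_Pow_iff finite_imageI finite_subset)
qed

lemma rk_ex: "\<exists>Y. Y \<subseteq> X \<and> ind Y \<and> card Y = rk X"
proof -
  have "rk X \<in> {card Y | Y. Y \<subseteq> X \<and> ind Y}"
    unfolding rk_def using rk_set_fin ind_empty by (intro Max_in) auto
  thus ?thesis by auto
qed

lemma rk_ge: "Y \<subseteq> X \<Longrightarrow> ind Y \<Longrightarrow> card Y \<le> rk X"
  unfolding rk_def using rk_set_fin by (intro Max_ge) auto

lemma rk_le_card: "X \<subseteq> E \<Longrightarrow> rk X \<le> card X"
  using rk_ex[of X] by (metis card_mono fin finite_subset)

lemma rk_mono: "X \<subseteq> Y \<Longrightarrow> rk X \<le> rk Y"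
  using rk_ex[of X] rk_ge[of _ Y] by (metis order_trans)

lemma rk_empty: "rk {} = 0"
  using rk_ex[of "{}"] by auto

lemma ind_iff_rk: "X \<subseteq> E \<Longrightarrow> ind X \<longleftrightarrow> rk X = card X"
proof
  assume "X \<subseteq> E" "ind X" thus "rk X = card X" using rk_ge[of X X] rk_le_card[of X] by auto
next
  assume X: "X \<subseteq> E" "rk X = card X"
  then obtain Y where Y: "Y \<subseteq> X" "ind Y" "card Y = card X" using rk_ex[of X] by auto
  have "finite X" using X fin finite_subset by auto
  hence "Y = X" using Y card_subset_eq by blast
  thus "ind X" using Y by simp
qed

lemma rk_extend:
  assumes "ind I" "I \<subseteq> X"
  shows "\<exists>J. I \<subseteq> J \<and> J \<subseteq> X \<and> ind J \<and> card J = rk X"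
proof -
  define C where "C = {J. I \<subseteq> J \<and> J \<subseteq> X \<and> ind J}"
  have "card ` C \<subseteq> card ` Pow E" using ind_E by (auto simp: C_def)
  hence fC: "finite (card ` C)" using fin by (meson finite_Pow_iff finite_imageI finite_subset)
  have "I \<in> C" using assms by (auto simp: C_def)
  hence "Max (card ` C) \<in> card ` C" using fC by (intro Max_in) auto
  then obtain J where J: "J \<in> C" "card J = Max (card ` C)" by auto
  have "card J = rk X"
  proof (rule ccontr)
    assume ne: "card J \<noteq> rk X"
    have "card J \<le> rk X" using J(1) rk_ge by (auto simp: C_def)
    hence lt: "card J < rk X" using ne by simp
    obtain K where K: "K \<subseteq> X" "ind K" "card K = rk X" using rk_ex by blast
    then obtain x where x: "x \<in> K - J" "ind (insert x J)" using aug[of J K] J lt by (auto simp: C_def)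
    hence "insert x J \<in> C" using J K by (auto simp: C_def)
    hence "card (insert x J) \<le> card J" using J fC by auto
    moreover have "finite J" using J(1) ind_E[of J] finite_subset[OF _ fin] unfolding C_def by simp
    ultimately show False using x by simp
  qed
  thus ?thesis using J by (auto simp: C_def)
qed

lemma rk_submod:
  assumes "X \<subseteq> E" "Y \<subseteq> E"
  shows "rk (X \<union> Y) + rk (X \<inter> Y) \<le> rk X + rk Y"
proof -
  obtain I where I: "I \<subseteq> X \<inter> Y" "ind I" "card I = rk (X \<inter> Y)" using rk_ex by blast
  obtain J where J: "I \<subseteq> J" "J \<subseteq> X \<union> Y" "ind J" "card J = rk (X \<union> Y)"
    using rk_extend[of I "X \<union> Y"] I by auto
  have fJ: "finite J" using J(3) ind_E[of J] finite_subset[OF _ fin] by simp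
  have "card (J \<inter> X) \<le> rk X" using J by (intro rk_ge) (auto intro: ind_sub)
  moreover have "card (J \<inter> Y) \<le> rk Y" using J by (intro rk_ge) (auto intro: ind_sub)
  moreover have "card (J \<inter> X) + card (J \<inter> Y) = card J + card (J \<inter> X \<inter> Y)"
  proof -
    have "J \<inter> X \<union> J \<inter> Y = J" using J by auto
    thus ?thesis using card_Un_Int[of "J \<inter> X" "J \<inter> Y"] fJ by (simp add: Int_ac)
  qed
  moreover have "card I \<le> card (J \<inter> X \<inter> Y)" using I J fJ by (intro card_mono) auto
  ultimately show ?thesis using I J by linarith
qed

end



definition good :: "'e set \<Rightarrow> ('e set \<Rightarrow> int) \<Rightarrow> bool" where
  "good E f \<longleftrightarrow> f {} = 0 \<and> (\<forall>X\<subseteq>E. \<forall>Y\<subseteq>E. X \<subseteq> Y \<longrightarrow> f X \<le> f Y) \<and>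
     (\<forall>X\<subseteq>E. \<forall>Y\<subseteq>E. f (X \<union> Y) + f (X \<inter> Y) \<le> f X + f Y) \<and>
     (\<forall>X\<subseteq>E. f X \<le> int (card X))"

lemma good_sub: "good E f \<Longrightarrow> E' \<subseteq> E \<Longrightarrow> good E' f"
  unfolding good_def by (meson order_trans)

lemma good_contract:
  assumes g: "good (insert e E) f" and fe: "f {e} = 1" and e: "e \<notin> E" and fin: "finite E"
  shows "good E (\<lambda>X. f (insert e X) - 1)"
proof -
  have m: "\<forall>X\<subseteq>insert e E. \<forall>Y\<subseteq>insert e E. X \<subseteq> Y \<longrightarrow> f X \<le> f Y"
   and s: "\<forall>X\<subseteq>insert e E. \<forall>Y\<subseteq>insert e E. f (X \<union> Y) + f (X \<inter> Y) \<le> f X + f Y"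
   and c: "\<forall>X\<subseteq>insert e E. f X \<le> int (card X)" using g by (auto simp: good_def)
  show ?thesis unfolding good_def
  proof (intro conjI allI impI)
    show "f (insert e {}) - 1 = 0" using fe by simp
  next
    fix X Y assume "X \<subseteq> E" "Y \<subseteq> E" "X \<subseteq> Y"
    hence "f (insert e X) \<le> f (insert e Y)" using m by (meson insert_mono)
    thus "f (insert e X) - 1 \<le> f (insert e Y) - 1" by simp
  next
    fix X Y assume XY: "X \<subseteq> E" "Y \<subseteq> E"
    have "insert e (X \<union> Y) = insert e X \<union> insert e Y" "insert e (X \<inter> Y) = insert e X \<inter> insert e Y"
      by auto
    thus "f (insert e (X \<union> Y)) - 1 + (f (insert e (X \<inter> Y)) - 1) \<le> f (insert e X) - 1 + (f (insert e Y) - 1)"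
      using s[rule_format, of "insert e X" "insert e Y"] XY by auto
  next
    fix X assume X: "X \<subseteq> E"
    have "finite X" using X fin finite_subset by auto
    moreover have "e \<notin> X" using X e by auto
    moreover have "insert e X \<subseteq> insert e E" using X by auto
    ultimately show "f (insert e X) - 1 \<le> int (card X)" using c[rule_format, of "insert e X"] by auto
  qed
qed

lemma intersection:
  assumes "finite E" "good E f" "good E g" "\<forall>A\<subseteq>E. int k \<le> f A + g (E - A)"
  shows "\<exists>X\<subseteq>E. card X = k \<and> f X = int k \<and> g X = int k"
  using assms
proof (induction E arbitrary: f g k rule: finite_induct)
  case empty
  hence "int k \<le> 0" using empty by (auto simp: good_def)
  thus ?case using empty by (auto simp: good_def)
next
  case (insert e E)
  note fE = insert.hyps(1) and eE = insert.hyps(2)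
  let ?E = "insert e E"
  have gf: "good E f" "good E g" using good_sub[OF insert.prems(1)] good_sub[OF insert.prems(2)] by auto
  have fcond: "\<forall>A\<subseteq>?E. int k \<le> f A + g (?E - A)" using insert.prems by simp
  have f0: "f {} = 0" and g0: "g {} = 0" using insert.prems by (auto simp: good_def)
  have fs: "\<forall>X\<subseteq>?E. \<forall>Y\<subseteq>?E. f (X \<union> Y) + f (X \<inter> Y) \<le> f X + f Y"
   and gs: "\<forall>X\<subseteq>?E. \<forall>Y\<subseteq>?E. g (X \<union> Y) + g (X \<inter> Y) \<le> g X + g Y"
   and fm: "\<forall>X\<subseteq>?E. \<forall>Y\<subseteq>?E. X \<subseteq> Y \<longrightarrow> f X \<le> f Y"
   and gm: "\<forall>X\<subseteq>?E. \<forall>Y\<subseteq>?E. X \<subseteq> Y \<longrightarrow> g X \<le> g Y"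
   and fc: "\<forall>X\<subseteq>?E. f X \<le> int (card X)"
   and gc: "\<forall>X\<subseteq>?E. g X \<le> int (card X)"
    using insert.prems by (auto simp: good_def)
  show ?case
  proof (cases "\<forall>A\<subseteq>E. int k \<le> f A + g (E - A)")
    case True
    then obtain X where "X \<subseteq> E" "card X = k" "f X = int k" "g X = int k"
      using insert.IH[OF gf] by blast
    thus ?thesis by blast
  next
    case False
    then obtain A where A: "A \<subseteq> E" "f A + g (E - A) < int k" by (auto simp: not_le)
    have eA: "e \<notin> A" using A eE by auto
    have "f (insert e A) \<le> f A + f {e}"
      using fs[rule_format, of A "{e}"] A eA f0 by (auto simp: insert_commute)
    moreover have "?E - insert e A = E - A" using eE by auto
    moreover have "int k \<le> f (insert e A) + g (?E - insert e A)" using fcond A by (meson insert_mono)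
    ultimately have "f {e} \<noteq> 0" using A by auto
    moreover have "f {e} \<ge> 0" using fm[rule_format, of "{}" "{e}"] f0 by auto
    moreover have "f {e} \<le> 1" using fc[rule_format, of "{e}"] by simp
    ultimately have fe: "f {e} = 1" by simp
    have "g (insert e (E - A)) \<le> g (E - A) + g {e}"
      using gs[rule_format, of "E - A" "{e}"] A eE g0 by auto
    moreover have "?E - A = insert e (E - A)" using eA by auto
    moreover have "int k \<le> f A + g (?E - A)" using fcond A by auto
    ultimately have "g {e} \<noteq> 0" using A by auto
    moreover have "g {e} \<ge> 0" using gm[rule_format, of "{}" "{e}"] g0 by auto
    moreover have "g {e} \<le> 1" using gc[rule_format, of "{e}"] by simp
    ultimately have ge: "g {e} = 1" by simp
    show ?thesis
    proof (cases "k = 0")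
      case True thus ?thesis using f0 g0 by (intro exI[of _ "{}"]) auto
    next
      case k0: False
      let ?f = "\<lambda>X. f (insert e X) - 1" and ?g = "\<lambda>X. g (insert e X) - 1"
      have gf': "good E ?f" "good E ?g"
        using good_contract[OF insert.prems(1) fe eE fE] good_contract[OF insert.prems(2) ge eE fE] by auto
      show ?thesis
      proof (cases "\<forall>B\<subseteq>E. int (k - 1) \<le> ?f B + ?g (E - B)")
        case True
        then obtain X where X: "X \<subseteq> E" "card X = k - 1" "?f X = int (k - 1)" "?g X = int (k - 1)"
          using insert.IH[OF gf'] by blast
        have "e \<notin> X" using X eE by auto
        moreover have "finite X" using X fE finite_subset by auto
        ultimately have "card (insert e X) = k" using X k0 by simp
        thus ?thesis using X k0 by (intro exI[of _ "insert e X"]) auto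
      next
        case False
        then obtain B where B: "B \<subseteq> E" "?f B + ?g (E - B) < int (k - 1)" by (auto simp: not_le)
        have "insert e (E - B) = ?E - B" using B eE by auto
        hence B2: "f (insert e B) + g (?E - B) \<le> int k" using B k0 by auto
        have s1: "f (A \<union> insert e B) + f (A \<inter> insert e B) \<le> f A + f (insert e B)"
          using fs[rule_format, of A "insert e B"] A B by blast
        have s2: "g ((E - A) \<union> (?E - B)) + g ((E - A) \<inter> (?E - B)) \<le> g (E - A) + g (?E - B)"
          using gs[rule_format, of "E - A" "?E - B"] A B by blast
        have e1: "A \<inter> insert e B = A \<inter> B" using eA by auto
        have e2: "(E - A) \<union> (?E - B) = ?E - (A \<inter> B)" using A B eE by auto
        have e3: "(E - A) \<inter> (?E - B) = ?E - (A \<union> insert e B)" using A B eE by auto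
        have c1: "int k \<le> f (A \<inter> B) + g (?E - (A \<inter> B))" using fcond[rule_format, of "A \<inter> B"] A by blast
        have c2: "int k \<le> f (A \<union> insert e B) + g (?E - (A \<union> insert e B))"
          using fcond[rule_format, of "A \<union> insert e B"] A B by blast
        have False using s1 s2 c1 c2 A B2 unfolding e1 e2 e3 by linarith
        thus ?thesis ..
      qed
    qed
  qed
qed



lemma srank_fin: "finite A \<Longrightarrow> finite {card A' | A'. A' \<subseteq> A \<and> rows_lin_indep G A' B}"
  by (rule finite_subset[of _ "card ` Pow A"]) auto

lemma rows_lin_indep_empty: "rows_lin_indep G {} B"
  by (simp add: rows_lin_indep_def)

lemma srank_ex: "finite A \<Longrightarrow> \<exists>A'\<subseteq>A. rows_lin_indep G A' B \<and> card A' = submatrix_rank G A B"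
proof -
  assume f: "finite A"
  have "submatrix_rank G A B \<in> {card A' | A'. A' \<subseteq> A \<and> rows_lin_indep G A' B}"
    unfolding submatrix_rank_def using srank_fin[OF f, of G B] rows_lin_indep_empty[of G B]
    by (intro Max_in) auto
  thus ?thesis by auto
qed

lemma srank_ge: "finite A \<Longrightarrow> A' \<subseteq> A \<Longrightarrow> rows_lin_indep G A' B \<Longrightarrow> card A' \<le> submatrix_rank G A B"
  unfolding submatrix_rank_def using srank_fin[of A G B] by (intro Max_ge) auto

definition vv :: "('r \<Rightarrow> 'c \<Rightarrow> 'a::field) \<Rightarrow> 'c set \<Rightarrow> ('r + 'c) \<Rightarrow> 'c \<Rightarrow> 'a" where
  "vv G T x = (case x of Inl i \<Rightarrow> (\<lambda>j. if j \<in> T then G i j else 0)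
                        | Inr j \<Rightarrow> (\<lambda>j'. if j' = j then 1 else 0))"

lemma sum_Inl_Inr:
  assumes "finite A" "finite C"
  shows "(\<Sum>x\<in>Inl ` A \<union> Inr ` C. h x) = (\<Sum>i\<in>A. h (Inl i)) + (\<Sum>j\<in>C. h (Inr j))"
  using assms by (subst sum.union_disjoint) (auto simp: sum.reindex)

lemma coord:
  assumes "finite A" "finite C" "C \<subseteq> T"
  shows "(\<Sum>x\<in>Inl ` A \<union> Inr ` C. fscale (c x) (vv G T x)) j =
         (if j \<in> T then (\<Sum>i\<in>A. c (Inl i) * G i j) else 0) + (if j \<in> C then c (Inr j) else 0)"
proof -
  have "(\<Sum>x\<in>Inl ` A \<union> Inr ` C. fscale (c x) (vv G T x)) j = (\<Sum>x\<in>Inl ` A \<union> Inr ` C. c x * vv G T x j)"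
    by (simp add: sum_fun_apply fscale_def)
  also have "\<dots> = (\<Sum>i\<in>A. c (Inl i) * vv G T (Inl i) j) + (\<Sum>j'\<in>C. c (Inr j') * vv G T (Inr j') j)"
    by (rule sum_Inl_Inr[OF assms(1,2)])
  also have "(\<Sum>i\<in>A. c (Inl i) * vv G T (Inl i) j) = (if j \<in> T then (\<Sum>i\<in>A. c (Inl i) * G i j) else 0)"
    by (simp add: vv_def)
  also have "(\<Sum>j'\<in>C. c (Inr j') * vv G T (Inr j') j) = (\<Sum>j'\<in>C. if j = j' then c (Inr j') else 0)"
    by (intro sum.cong) (auto simp: vv_def)
  also have "\<dots> = (if j \<in> C then c (Inr j) else 0)"
    using assms by (simp add: sum.delta)
  finally show ?thesis .
qed

locale mx =
  fixes G :: "'r \<Rightarrow> 'c \<Rightarrow> 'a::field" and S :: "'r set" and T :: "'c set"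
  assumes finS: "finite S" and finT: "finite T"
begin

abbreviation "EE \<equiv> Inl ` S \<union> Inr ` T"

definition ind1 :: "('r + 'c) set \<Rightarrow> bool" where
  "ind1 X \<longleftrightarrow> X \<subseteq> EE \<and> lind (vv G T) X"

sublocale M: indsys EE ind1
proof
  show "finite EE" using finS finT by simp
  show "ind1 X \<Longrightarrow> X \<subseteq> EE" for X by (simp add: ind1_def)
  show "ind1 {}" by (simp add: ind1_def lind_def fvs.independent_empty)
  show "ind1 Y \<Longrightarrow> X \<subseteq> Y \<Longrightarrow> ind1 X" for X Y by (auto simp: ind1_def intro: lind_sub)
  show "ind1 I \<Longrightarrow> ind1 J \<Longrightarrow> card I < card J \<Longrightarrow> \<exists>x\<in>J - I. ind1 (insert x I)" for I J
  proof -
    assume a: "ind1 I" "ind1 J" "card I < card J"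
    then obtain x where x: "x \<in> J - I" "lind (vv G T) (insert x I)"
      using lind_aug[of "vv G T" I J] by (auto simp: ind1_def)
    have "insert x I \<subseteq> EE" using a x by (auto simp: ind1_def)
    hence "ind1 (insert x I)" using x by (simp add: ind1_def)
    thus ?thesis using x by blast
  qed
qed

lemma char:
  assumes A: "A \<subseteq> S" and B: "B \<subseteq> T"
  shows "ind1 (Inl ` A \<union> Inr ` (T - B)) \<longleftrightarrow> rows_lin_indep G A B"
proof -
  have fA: "finite A" using A finS finite_subset by auto
  have fC: "finite (T - B)" using finT by simp
  have fX: "finite (Inl ` A \<union> Inr ` (T - B))" using fA fC by simp
  have sub: "Inl ` A \<union> Inr ` (T - B) \<subseteq> EE" using A by auto
  let ?X = "Inl ` A \<union> Inr ` (T - B)"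
  have "ind1 ?X \<longleftrightarrow> lind (vv G T) ?X" by (simp only: ind1_def sub simp_thms)
  also have "\<dots> \<longleftrightarrow> inj_on (vv G T) ?X \<and> fvs.independent (vv G T ` ?X)"
    by (simp only: lind_def fX simp_thms)
  also have "\<dots> \<longleftrightarrow> (\<forall>c. (\<Sum>x\<in>?X. fscale (c x) (vv G T x)) = 0 \<longrightarrow> (\<forall>x\<in>?X. c x = 0))"
    by (rule indexed_indep[OF fX])
  also have "\<dots> \<longleftrightarrow> rows_lin_indep G A B"
  proof
    assume h: "\<forall>c. (\<Sum>x\<in>?X. fscale (c x) (vv G T x)) = 0 \<longrightarrow> (\<forall>x\<in>?X. c x = 0)"
    show "rows_lin_indep G A B" unfolding rows_lin_indep_def
    proof (intro conjI fA allI impI ballI)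
      fix c' i assume c': "\<forall>j\<in>B. (\<Sum>i\<in>A. c' i * G i j) = 0" and i: "i \<in> A"
      define c where "c x = (case x of Inl i \<Rightarrow> c' i | Inr j \<Rightarrow> - (\<Sum>i\<in>A. c' i * G i j))" for x
      have "(\<Sum>x\<in>?X. fscale (c x) (vv G T x)) = 0"
      proof
        fix j
        show "(\<Sum>x\<in>?X. fscale (c x) (vv G T x)) j = 0 j"
          using coord[OF fA fC, of T c G j] c' B by (auto simp: c_def)
      qed
      hence "c (Inl i) = 0" using h i by blast
      thus "c' i = 0" by (simp add: c_def)
    qed
  next
    assume r: "rows_lin_indep G A B"
    show "\<forall>c. (\<Sum>x\<in>?X. fscale (c x) (vv G T x)) = 0 \<longrightarrow> (\<forall>x\<in>?X. c x = 0)"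
    proof (intro allI impI)
      fix c assume s: "(\<Sum>x\<in>?X. fscale (c x) (vv G T x)) = 0"
      have cj: "(if j \<in> T then (\<Sum>i\<in>A. c (Inl i) * G i j) else 0) + (if j \<in> T - B then c (Inr j) else 0) = 0" for j
        using coord[OF fA fC, of T c G j] s by simp
      have cz: "\<forall>j\<in>B. (\<Sum>i\<in>A. c (Inl i) * G i j) = 0"
      proof
        fix j assume j: "j \<in> B"
        hence "j \<in> T" "j \<notin> T - B" using B by auto
        thus "(\<Sum>i\<in>A. c (Inl i) * G i j) = 0" using cj[of j] by simp
      qed
      have rr: "\<forall>c'. (\<forall>j\<in>B. (\<Sum>i\<in>A. c' i * G i j) = 0) \<longrightarrow> (\<forall>i\<in>A. c' i = 0)"
        using r by (simp add: rows_lin_indep_def)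
      have z: "\<forall>i\<in>A. c (Inl i) = 0" using rr[rule_format, of "\<lambda>i. c (Inl i)"] cz by blast
      have "\<forall>j\<in>T - B. c (Inr j) = 0"
      proof
        fix j assume "j \<in> T - B"
        moreover have "(\<Sum>i\<in>A. c (Inl i) * G i j) = 0" using z by simp
        ultimately show "c (Inr j) = 0" using cj[of j] by simp
      qed
      thus "\<forall>x\<in>?X. c x = 0" using z by blast
    qed
  qed
  finally show ?thesis .
qed

lemma card_X:
  assumes "A \<subseteq> S" "C \<subseteq> T"
  shows "card (Inl ` A \<union> Inr ` C) = card A + card C"
proof -
  have "finite A" "finite C" using assms finS finT finite_subset by auto
  thus ?thesis by (subst card_Un_disjoint) (auto simp: card_image)
qed

lemma rank_le_cols:
  assumes A: "A \<subseteq> S" and B: "B \<subseteq> T" and r: "rows_lin_indep G A B"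
  shows "card A \<le> card B"
proof (rule ccontr)
  assume "\<not> ?thesis"
  hence lt: "card A > card B" by simp
  have fB: "finite B" using B finT finite_subset by auto
  have "card (T - B) = card T - card B" using B fB by (simp add: card_Diff_subset)
  moreover have "card B \<le> card T" using B finT card_mono by auto
  moreover have "card (Inl ` A \<union> Inr ` (T - B)) = card A + card (T - B)"
    using card_X[OF A, of "T - B"] by simp
  moreover have "card (Inr ` T :: ('r + 'c) set) = card T" by (simp add: card_image)
  ultimately have lt2: "card (Inr ` T :: ('r + 'c) set) < card (Inl ` A \<union> Inr ` (T - B))"
    using lt by arith
  have i1: "ind1 (Inr ` T)" using char[of "{}" "{}"] rows_lin_indep_empty by simp
  have i2: "ind1 (Inl ` A \<union> Inr ` (T - B))" using char[OF A B] r by simp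
  obtain x where x: "x \<in> (Inl ` A \<union> Inr ` (T - B)) - Inr ` T" "ind1 (insert x (Inr ` T))"
    using M.aug[OF i1 i2 lt2] by blast
  then obtain i where i: "x = Inl i" "i \<in> A" by auto
  have "insert x (Inr ` T) = Inl ` {i} \<union> Inr ` (T - {})" using i by auto
  moreover have "{i} \<subseteq> S" using i A by auto
  ultimately have "rows_lin_indep G {i} {}" using char[of "{i}" "{}"] x by simp
  hence hh: "\<forall>c. (\<forall>j\<in>{}. (\<Sum>i\<in>{i}. c i * G i j) = 0) \<longrightarrow> (\<forall>i'\<in>{i}. c i' = 0)"
    unfolding rows_lin_indep_def by blast
  show False using hh[rule_format, of "\<lambda>_. (1::'a)" i] by simp
qed

lemma srank_le_cols:
  assumes A: "A \<subseteq> S" and B: "B \<subseteq> T" shows "submatrix_rank G A B \<le> card B"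
proof -
  have "finite A" using A finS finite_subset by auto
  then obtain A' where A': "A' \<subseteq> A" "rows_lin_indep G A' B" "card A' = submatrix_rank G A B"
    using srank_ex[of A G B] by blast
  have "card A' \<le> card B" using rank_le_cols[of A' B] A' A B by auto
  thus ?thesis using A' by simp
qed

lemma rk_lower:
  assumes A: "A \<subseteq> S" and B: "B \<subseteq> T"
  shows "card (T - B) + submatrix_rank G A B \<le> M.rk (Inl ` A \<union> Inr ` (T - B))"
proof -
  obtain A' where A': "A' \<subseteq> A" "rows_lin_indep G A' B" "card A' = submatrix_rank G A B"
    using srank_ex[of A G B] A finS finite_subset by blast
  have "ind1 (Inl ` A' \<union> Inr ` (T - B))" using char[of A' B] A' A B by auto
  hence "card (Inl ` A' \<union> Inr ` (T - B)) \<le> M.rk (Inl ` A \<union> Inr ` (T - B))"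
    using A' by (intro M.rk_ge) auto
  thus ?thesis using card_X[of A' "T - B"] A' A by auto
qed

lemma rk_upper:
  assumes A: "A \<subseteq> S" and B: "B \<subseteq> T"
  shows "M.rk (Inl ` A \<union> Inr ` (T - B)) \<le> card (T - B) + submatrix_rank G A B"
proof -
  have "ind1 (Inr ` (T - B))" using char[of "{}" B] B rows_lin_indep_empty by simp
  then obtain J where J: "Inr ` (T - B) \<subseteq> J" "J \<subseteq> Inl ` A \<union> Inr ` (T - B)" "ind1 J"
     "card J = M.rk (Inl ` A \<union> Inr ` (T - B))"
    using M.rk_extend[of "Inr ` (T - B)" "Inl ` A \<union> Inr ` (T - B)"] by auto
  define A' where "A' = {i. Inl i \<in> J}"
  have JA: "J = Inl ` A' \<union> Inr ` (T - B)" using J by (auto simp: A'_def)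
  have A'A: "A' \<subseteq> A" using J by (auto simp: A'_def)
  have "rows_lin_indep G A' B" using char[of A' B] A'A A B J JA by auto
  hence "card A' \<le> submatrix_rank G A B" using A'A A finS finite_subset by (intro srank_ge) auto
  thus ?thesis using J JA card_X[of A' "T - B"] A'A A by auto
qed

end



lemma card_diff_add: "X \<subseteq> T \<Longrightarrow> finite T \<Longrightarrow> card (T - X) + card X = card T"
  by (metis card_Diff_subset card_mono finite_subset le_add_diff_inverse2)

locale ctx = mx G S T for G :: "'r \<Rightarrow> 'c \<Rightarrow> 'a::field" and S T +
  fixes Sp :: "nat \<Rightarrow> 'r set" and Tp :: "nat \<Rightarrow> 'c set" and m n R :: nat and s t :: "nat \<Rightarrow> nat"
  assumes Sdef: "S = (\<Union>i\<in>{1..m}. Sp i)" and Tdef: "T = (\<Union>j\<in>{1..n}. Tp j)"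
    and dS: "\<forall>i\<in>{1..m}. \<forall>i'\<in>{1..m}. i \<noteq> i' \<longrightarrow> Sp i \<inter> Sp i' = {}"
    and dT: "\<forall>j\<in>{1..n}. \<forall>j'\<in>{1..n}. j \<noteq> j' \<longrightarrow> Tp j \<inter> Tp j' = {}"
    and sR: "(\<Sum>i=1..m. s i) = R" and tR: "(\<Sum>j=1..n. t j) = R"
begin

lemma SpS: "i \<in> {1..m} \<Longrightarrow> Sp i \<subseteq> S" using Sdef by auto
lemma TpT: "j \<in> {1..n} \<Longrightarrow> Tp j \<subseteq> T" using Tdef by auto
lemma finSp: "i \<in> {1..m} \<Longrightarrow> finite (Sp i)" using SpS finS finite_subset by metis
lemma finTp: "j \<in> {1..n} \<Longrightarrow> finite (Tp j)" using TpT finT finite_subset by metis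

lemma card_US:
  assumes "I \<subseteq> {1..m}" "\<forall>i\<in>I. X i \<subseteq> Sp i"
  shows "card (\<Union>i\<in>I. X i) = (\<Sum>i\<in>I. card (X i))"
proof (rule card_UN_disjoint)
  show "finite I" using assms finite_subset by blast
  show "\<forall>i\<in>I. finite (X i)" using assms finSp finite_subset by blast
  show "\<forall>i\<in>I. \<forall>j\<in>I. i \<noteq> j \<longrightarrow> X i \<inter> X j = {}"
  proof (intro ballI impI)
    fix i j assume "i \<in> I" "j \<in> I" "i \<noteq> j"
    hence "Sp i \<inter> Sp j = {}" using dS assms by blast
    thus "X i \<inter> X j = {}" using assms \<open>i \<in> I\<close> \<open>j \<in> I\<close> by blast
  qed
qed

lemma card_UT:
  assumes "K \<subseteq> {1..n}" "\<forall>i\<in>K. X i \<subseteq> Tp i"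
  shows "card (\<Union>i\<in>K. X i) = (\<Sum>i\<in>K. card (X i))"
proof (rule card_UN_disjoint)
  show "finite K" using assms finite_subset by blast
  show "\<forall>i\<in>K. finite (X i)" using assms finTp finite_subset by blast
  show "\<forall>i\<in>K. \<forall>j\<in>K. i \<noteq> j \<longrightarrow> X i \<inter> X j = {}"
  proof (intro ballI impI)
    fix i j assume "i \<in> K" "j \<in> K" "i \<noteq> j"
    hence "Tp i \<inter> Tp j = {}" using dT assms by blast
    thus "X i \<inter> X j = {}" using assms \<open>i \<in> K\<close> \<open>j \<in> K\<close> by blast
  qed
qed

lemma part:
  assumes I: "I \<subseteq> {1..m}" and K: "K \<subseteq> {1..n}"
    and X: "X \<subseteq> Inl ` (\<Union>i\<in>I. Sp i) \<union> Inr ` (\<Union>k\<in>K. Tp k)"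
  shows "card X = (\<Sum>i\<in>I. card (X \<inter> Inl ` Sp i)) + (\<Sum>k\<in>K. card (X \<inter> Inr ` Tp k))"
proof -
  define L where "L = (\<Union>i\<in>I. X \<inter> Inl ` Sp i)"
  define Q where "Q = (\<Union>k\<in>K. X \<inter> Inr ` Tp k)"
  have XLQ: "X = L \<union> Q"
  proof
    show "L \<union> Q \<subseteq> X" by (auto simp: L_def Q_def)
    show "X \<subseteq> L \<union> Q"
    proof
      fix x assume x: "x \<in> X"
      have "x \<in> Inl ` (\<Union>i\<in>I. Sp i) \<or> x \<in> Inr ` (\<Union>k\<in>K. Tp k)" using X x by blast
      thus "x \<in> L \<union> Q" using x unfolding L_def Q_def image_UN by blast
    qed
  qed
  have fI: "finite I" "finite K" using I K finite_subset by auto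
  have cL: "card L = (\<Sum>i\<in>I. card (X \<inter> Inl ` Sp i))" unfolding L_def
  proof (rule card_UN_disjoint)
    show "finite I" by fact
    show "\<forall>i\<in>I. finite (X \<inter> Inl ` Sp i)" using finSp I by blast
    show "\<forall>i\<in>I. \<forall>j\<in>I. i \<noteq> j \<longrightarrow> X \<inter> Inl ` Sp i \<inter> (X \<inter> Inl ` Sp j) = {}"
    proof (intro ballI impI)
      fix i j assume "i \<in> I" "j \<in> I" "i \<noteq> j"
      hence "Sp i \<inter> Sp j = {}" using dS I by blast
      thus "X \<inter> Inl ` Sp i \<inter> (X \<inter> Inl ` Sp j) = {}" by blast
    qed
  qed
  have cQ: "card Q = (\<Sum>k\<in>K. card (X \<inter> Inr ` Tp k))" unfolding Q_def
  proof (rule card_UN_disjoint)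
    show "finite K" by fact
    show "\<forall>i\<in>K. finite (X \<inter> Inr ` Tp i)" using finTp K by blast
    show "\<forall>i\<in>K. \<forall>j\<in>K. i \<noteq> j \<longrightarrow> X \<inter> Inr ` Tp i \<inter> (X \<inter> Inr ` Tp j) = {}"
    proof (intro ballI impI)
      fix i j assume "i \<in> K" "j \<in> K" "i \<noteq> j"
      hence "Tp i \<inter> Tp j = {}" using dT K by blast
      thus "X \<inter> Inr ` Tp i \<inter> (X \<inter> Inr ` Tp j) = {}" by blast
    qed
  qed
  have "finite L" using cL finSp I fI unfolding L_def by blast
  moreover have "finite Q" using finTp K fI unfolding Q_def by blast
  moreover have "L \<inter> Q = {}" by (auto simp: L_def Q_def)
  ultimately have "card X = card L + card Q" using XLQ card_Un_disjoint by blast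
  thus ?thesis using cL cQ by simp
qed

lemma TK_compl: "K \<subseteq> {1..n} \<Longrightarrow> T - (\<Union>k\<in>K. Tp k) = (\<Union>k\<in>{1..n} - K. Tp k)"
proof
  assume K: "K \<subseteq> {1..n}"
  show "T - (\<Union>k\<in>K. Tp k) \<subseteq> (\<Union>k\<in>{1..n} - K. Tp k)"
  proof
    fix x assume x: "x \<in> T - (\<Union>k\<in>K. Tp k)"
    then obtain j where "j \<in> {1..n}" "x \<in> Tp j" using Tdef by auto
    moreover have "j \<notin> K" using x calculation by auto
    ultimately show "x \<in> (\<Union>k\<in>{1..n} - K. Tp k)" by auto
  qed
  show "(\<Union>k\<in>{1..n} - K. Tp k) \<subseteq> T - (\<Union>k\<in>K. Tp k)"
  proof
    fix x assume "x \<in> (\<Union>k\<in>{1..n} - K. Tp k)"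
    then obtain j where j: "j \<in> {1..n} - K" "x \<in> Tp j" by auto
    have "x \<notin> Tp k" if "k \<in> K" for k
    proof -
      have "k \<in> {1..n}" "k \<noteq> j" using that K j by auto
      hence "Tp j \<inter> Tp k = {}" using dT j by blast
      thus ?thesis using j by auto
    qed
    thus "x \<in> T - (\<Union>k\<in>K. Tp k)" using j Tdef by auto
  qed
qed

lemma nec:
  assumes ss: "\<forall>i\<in>{1..m}. ss i \<subseteq> Sp i \<and> card (ss i) = s i"
    and tt: "\<forall>j\<in>{1..n}. tt j \<subseteq> Tp j \<and> card (tt j) = t j"
    and ns: "nonsingular_submatrix G (\<Union>i\<in>{1..m}. ss i) (\<Union>j\<in>{1..n}. tt j)"
    and I: "I \<subseteq> {1..m}" and K: "K \<subseteq> {1..n}"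
  shows "int (submatrix_rank G (\<Union>i\<in>I. Sp i) (\<Union>k\<in>K. Tp k)) \<ge> int (\<Sum>i\<in>I. s i) + int (\<Sum>k\<in>K. t k) - int R"
proof -
  define A where "A = (\<Union>i\<in>{1..m}. ss i)"
  define B where "B = (\<Union>j\<in>{1..n}. tt j)"
  define SI where "SI = (\<Union>i\<in>I. Sp i)"
  define TK where "TK = (\<Union>k\<in>K. Tp k)"
  have AS: "A \<subseteq> S" using ss Sdef by (auto simp: A_def)
  have BT: "B \<subseteq> T" using tt Tdef by (auto simp: B_def)
  have SIS: "SI \<subseteq> S" using I Sdef by (auto simp: SI_def)
  have TKT: "TK \<subseteq> T" using K Tdef by (auto simp: TK_def)
  have fA: "finite A" using AS finS finite_subset by metis
  have fB: "finite B" using BT finT finite_subset by metis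
  have fTK: "finite TK" using TKT finT finite_subset by metis
  have cA: "card A = R" unfolding A_def using card_US[of "{1..m}" ss] ss sR by simp
  have cB: "card B = R" unfolding B_def using card_UT[of "{1..n}" tt] tt tR by simp
  obtain A' where A': "A' \<subseteq> A" "rows_lin_indep G A' B" "card A' = submatrix_rank G A B"
    using srank_ex[OF fA] by blast
  have "submatrix_rank G A B = card A" using ns by (simp add: nonsingular_submatrix_def A_def B_def)
  hence "A' = A" using A' fA card_subset_eq by metis
  hence ri: "rows_lin_indep G A B" using A' by simp
  define X where "X = Inl ` A \<union> Inr ` (T - B)"
  have indX: "ind1 X" unfolding X_def using char[OF AS BT] ri by simp
  define W where "W = Inl ` SI \<union> Inr ` (T - TK)"
  have h1: "card (X \<inter> W) \<le> M.rk W" using indX by (intro M.rk_ge) (auto intro: M.ind_sub)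
  have h2: "M.rk W \<le> card (T - TK) + submatrix_rank G SI TK" unfolding W_def by (rule rk_upper[OF SIS TKT])
  have XW: "X \<inter> W = Inl ` (A \<inter> SI) \<union> Inr ` (T - (B \<union> TK))" unfolding X_def W_def by auto
  have h3: "card (X \<inter> W) = card (A \<inter> SI) + card (T - (B \<union> TK))"
    unfolding XW using AS by (intro card_X) auto
  have "A \<inter> SI = (\<Union>i\<in>I. ss i)"
  proof
    show "A \<inter> SI \<subseteq> (\<Union>i\<in>I. ss i)"
    proof
      fix x assume "x \<in> A \<inter> SI"
      then obtain i i' where ii: "i \<in> {1..m}" "x \<in> ss i" "i' \<in> I" "x \<in> Sp i'"
        unfolding A_def SI_def by auto
      have "x \<in> Sp i" using ii ss by auto
      hence "i = i'" using ii dS I by blast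
      thus "x \<in> (\<Union>i\<in>I. ss i)" using ii by auto
    qed
    show "(\<Union>i\<in>I. ss i) \<subseteq> A \<inter> SI" using I ss unfolding A_def SI_def by blast
  qed
  moreover have "\<forall>i\<in>I. ss i \<subseteq> Sp i" using ss I by auto
  moreover have "(\<Sum>i\<in>I. card (ss i)) = (\<Sum>i\<in>I. s i)" using ss I by (intro sum.cong) auto
  ultimately have h4: "card (A \<inter> SI) = (\<Sum>i\<in>I. s i)"
    using card_US[OF I, of ss] by simp
  have "B \<inter> TK = (\<Union>k\<in>K. tt k)"
  proof
    show "B \<inter> TK \<subseteq> (\<Union>k\<in>K. tt k)"
    proof
      fix x assume "x \<in> B \<inter> TK"
      then obtain i i' where ii: "i \<in> {1..n}" "x \<in> tt i" "i' \<in> K" "x \<in> Tp i'"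
        unfolding B_def TK_def by auto
      have "x \<in> Tp i" using ii tt by auto
      hence "i = i'" using ii dT K by blast
      thus "x \<in> (\<Union>k\<in>K. tt k)" using ii by auto
    qed
    show "(\<Union>k\<in>K. tt k) \<subseteq> B \<inter> TK" using K tt unfolding B_def TK_def by blast
  qed
  moreover have "\<forall>i\<in>K. tt i \<subseteq> Tp i" using tt K by auto
  moreover have "(\<Sum>i\<in>K. card (tt i)) = (\<Sum>i\<in>K. t i)" using tt K by (intro sum.cong) auto
  ultimately have h5: "card (B \<inter> TK) = (\<Sum>k\<in>K. t k)"
    using card_UT[OF K, of tt] by simp
  have h6: "card (T - (B \<union> TK)) + card (B \<union> TK) = card T" using BT TKT finT by (intro card_diff_add) auto
  have h7: "card (B \<union> TK) + card (B \<inter> TK) = card B + card TK" using card_Un_Int[OF fB fTK] by simp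
  have h8: "card (T - TK) + card TK = card T" using TKT finT by (rule card_diff_add)
  have "(\<Sum>i\<in>I. s i) + (\<Sum>k\<in>K. t k) \<le> submatrix_rank G SI TK + R"
    using h1 h2 h3 h4 h5 h6 h7 h8 cB by linarith
  hence "int (\<Sum>i\<in>I. s i) + int (\<Sum>k\<in>K. t k) \<le> int (submatrix_rank G SI TK) + int R"
    by (simp only: of_nat_add[symmetric] of_nat_le_iff)
  thus ?thesis unfolding SI_def TK_def by linarith
qed

lemma t_le:
  assumes hyp: "\<forall>I\<subseteq>{1..m}. \<forall>K\<subseteq>{1..n}.
        int (submatrix_rank G (\<Union>i\<in>I. Sp i) (\<Union>k\<in>K. Tp k))
          \<ge> int (\<Sum>i\<in>I. s i) + int (\<Sum>k\<in>K. t k) - int R"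
    and j: "j \<in> {1..n}"
  shows "t j \<le> card (Tp j)"
proof -
  have "int (submatrix_rank G (\<Union>i\<in>{1..m}. Sp i) (\<Union>k\<in>{j}. Tp k))
          \<ge> int (\<Sum>i\<in>{1..m}. s i) + int (\<Sum>k\<in>{j}. t k) - int R"
    using hyp[rule_format, of "{1..m}" "{j}"] j by simp
  hence "int (submatrix_rank G S (Tp j)) \<ge> int (t j)" using Sdef sR by (simp del: of_nat_sum)
  moreover have "submatrix_rank G S (Tp j) \<le> card (Tp j)" using TpT[OF j] by (intro srank_le_cols) auto
  ultimately show ?thesis by linarith
qed

lemma min_submod:
  fixes u w a b c :: nat
  shows "u + w = a + b \<Longrightarrow> w \<le> a \<Longrightarrow> w \<le> b \<Longrightarrow> a \<le> u \<Longrightarrow> b \<le> u \<Longrightarrow>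
    min u c + min w c \<le> min a c + min b c"
  by (simp add: min_def)

lemma term_submod:
  assumes "finite X" "finite Y"
  shows "min (card ((X \<union> Y) \<inter> P)) c + min (card ((X \<inter> Y) \<inter> P)) c \<le>
         min (card (X \<inter> P)) c + min (card (Y \<inter> P)) (c::nat)"
proof (rule min_submod)
  have fx: "finite (X \<inter> P)" "finite (Y \<inter> P)" using assms by auto
  have "(X \<inter> P) \<union> (Y \<inter> P) = (X \<union> Y) \<inter> P" "(X \<inter> P) \<inter> (Y \<inter> P) = (X \<inter> Y) \<inter> P" by auto
  thus "card ((X \<union> Y) \<inter> P) + card ((X \<inter> Y) \<inter> P) = card (X \<inter> P) + card (Y \<inter> P)"
    using card_Un_Int[OF fx] by simp
  have fu: "finite ((X \<union> Y) \<inter> P)" using assms by auto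
  show "card ((X \<inter> Y) \<inter> P) \<le> card (X \<inter> P)" using fx by (intro card_mono) auto
  show "card ((X \<inter> Y) \<inter> P) \<le> card (Y \<inter> P)" using fx by (intro card_mono) auto
  show "card (X \<inter> P) \<le> card ((X \<union> Y) \<inter> P)" using fu by (intro card_mono) auto
  show "card (Y \<inter> P) \<le> card ((X \<union> Y) \<inter> P)" using fu by (intro card_mono) auto
qed

definition gS :: "('r + 'c) set \<Rightarrow> nat" where
  "gS X = (\<Sum>i\<in>{1..m}. min (card (X \<inter> Inl ` Sp i)) (s i))"
definition gT :: "('r + 'c) set \<Rightarrow> nat" where
  "gT X = (\<Sum>j\<in>{1..n}. min (card (X \<inter> Inr ` Tp j)) (card (Tp j) - t j))"
definition gg :: "('r + 'c) set \<Rightarrow> int" where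
  "gg X = int (gS X + gT X)"
definition ff :: "('r + 'c) set \<Rightarrow> int" where
  "ff X = int (M.rk X)"

lemma finE: "finite EE" using finS finT by simp

lemma EE_eq: "EE = Inl ` (\<Union>i\<in>{1..m}. Sp i) \<union> Inr ` (\<Union>k\<in>{1..n}. Tp k)"
  using Sdef Tdef by simp

lemma part_E: "X \<subseteq> EE \<Longrightarrow>
   card X = (\<Sum>i\<in>{1..m}. card (X \<inter> Inl ` Sp i)) + (\<Sum>k\<in>{1..n}. card (X \<inter> Inr ` Tp k))"
  using part[of "{1..m}" "{1..n}" X] EE_eq by simp

lemma good_ff: "good EE ff"
  unfolding good_def ff_def
proof (intro conjI allI impI)
  show "int (M.rk {}) = 0" by (simp add: M.rk_empty)
  show "int (M.rk X) \<le> int (M.rk Y)" if "X \<subseteq> Y" for X Y using M.rk_mono[OF that] by simp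
  show "int (M.rk (X \<union> Y)) + int (M.rk (X \<inter> Y)) \<le> int (M.rk X) + int (M.rk Y)"
    if "X \<subseteq> EE" "Y \<subseteq> EE" for X Y using M.rk_submod[OF that] by linarith
  show "int (M.rk X) \<le> int (card X)" if "X \<subseteq> EE" for X using M.rk_le_card[OF that] by simp
qed

lemma good_gg: "good EE gg"
  unfolding good_def
proof (intro conjI allI impI)
  show "gg {} = 0" by (simp add: gg_def gS_def gT_def)
  show "gg X \<le> gg Y" if "X \<subseteq> EE" "Y \<subseteq> EE" "X \<subseteq> Y" for X Y
  proof -
    have fY: "finite Y" using that(2) finE by (rule finite_subset)
    have "gS X \<le> gS Y" unfolding gS_def
      by (intro sum_mono min.mono card_mono) (use fY that in auto)
    moreover have "gT X \<le> gT Y" unfolding gT_def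
      by (intro sum_mono min.mono card_mono) (use fY that in auto)
    ultimately show ?thesis by (simp add: gg_def)
  qed
  show "gg (X \<union> Y) + gg (X \<inter> Y) \<le> gg X + gg Y" if "X \<subseteq> EE" "Y \<subseteq> EE" for X Y
  proof -
    have fX: "finite X" using that(1) finE by (rule finite_subset)
    have fY: "finite Y" using that(2) finE by (rule finite_subset)
    have "gS (X \<union> Y) + gS (X \<inter> Y) \<le> gS X + gS Y" unfolding gS_def sum.distrib[symmetric]
      by (intro sum_mono term_submod fX fY)
    moreover have "gT (X \<union> Y) + gT (X \<inter> Y) \<le> gT X + gT Y" unfolding gT_def sum.distrib[symmetric]
      by (intro sum_mono term_submod fX fY)
    ultimately show ?thesis by (simp add: gg_def)
  qed
  show "gg X \<le> int (card X)" if "X \<subseteq> EE" for X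
  proof -
    have "gS X \<le> (\<Sum>i\<in>{1..m}. card (X \<inter> Inl ` Sp i))" unfolding gS_def by (intro sum_mono) auto
    moreover have "gT X \<le> (\<Sum>k\<in>{1..n}. card (X \<inter> Inr ` Tp k))" unfolding gT_def by (intro sum_mono) auto
    ultimately have "gS X + gT X \<le> card X" using part_E[OF that] by linarith
    thus ?thesis by (simp add: gg_def)
  qed
qed

lemma cond:
  assumes hyp: "\<forall>I\<subseteq>{1..m}. \<forall>K\<subseteq>{1..n}.
        int (submatrix_rank G (\<Union>i\<in>I. Sp i) (\<Union>k\<in>K. Tp k))
          \<ge> int (\<Sum>i\<in>I. s i) + int (\<Sum>k\<in>K. t k) - int R"
  shows "\<forall>Z\<subseteq>EE. int (card T) \<le> ff Z + gg (EE - Z)"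
proof (intro allI impI)
  fix Z assume Z: "Z \<subseteq> EE"
  define Y where "Y = EE - Z"
  define a where "a i = card (Y \<inter> Inl ` Sp i)" for i
  define b where "b j = card (Y \<inter> Inr ` Tp j)" for j
  define c where "c j = card (Tp j) - t j" for j
  define I where "I = {i\<in>{1..m}. a i < s i}"
  define K' where "K' = {j\<in>{1..n}. b j < c j}"
  define K where "K = {1..n} - K'"
  define SI where "SI = (\<Union>i\<in>I. Sp i)"
  define TK where "TK = (\<Union>k\<in>K. Tp k)"
  have I: "I \<subseteq> {1..m}" by (auto simp: I_def)
  have K'n: "K' \<subseteq> {1..n}" by (auto simp: K'_def)
  have K: "K \<subseteq> {1..n}" by (auto simp: K_def)
  have SIS: "SI \<subseteq> S" using I Sdef by (auto simp: SI_def)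
  have TKT: "TK \<subseteq> T" using K Tdef by (auto simp: TK_def)
  have fTK: "finite TK" using TKT finT by (rule finite_subset)
  have TKc: "T - TK = (\<Union>k\<in>K'. Tp k)"
  proof -
    have "{1..n} - K = K'" using K'n by (auto simp: K_def)
    thus ?thesis using TK_compl[OF K] by (simp add: TK_def)
  qed
  define W where "W = Inl ` SI \<union> Inr ` (T - TK)"
  define D where "D = Y \<inter> W"
  have WE: "W \<subseteq> EE" using SIS by (auto simp: W_def)
  have DE: "D \<subseteq> EE" by (auto simp: D_def Y_def)
  have cD: "card D = (\<Sum>i\<in>I. a i) + (\<Sum>k\<in>K'. b k)"
  proof -
    have DW: "D \<subseteq> Inl ` (\<Union>i\<in>I. Sp i) \<union> Inr ` (\<Union>k\<in>K'. Tp k)"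
      using TKc by (auto simp: D_def W_def SI_def)
    have "card D = (\<Sum>i\<in>I. card (D \<inter> Inl ` Sp i)) + (\<Sum>k\<in>K'. card (D \<inter> Inr ` Tp k))"
      by (rule part[OF I K'n DW])
    also have "(\<Sum>i\<in>I. card (D \<inter> Inl ` Sp i)) = (\<Sum>i\<in>I. a i)"
    proof (rule sum.cong)
      fix i assume "i \<in> I"
      hence "D \<inter> Inl ` Sp i = Y \<inter> Inl ` Sp i" by (auto simp: D_def W_def SI_def)
      thus "card (D \<inter> Inl ` Sp i) = a i" by (simp add: a_def)
    qed simp
    also have "(\<Sum>k\<in>K'. card (D \<inter> Inr ` Tp k)) = (\<Sum>k\<in>K'. b k)"
    proof (rule sum.cong)
      fix k assume "k \<in> K'"
      hence "Tp k \<subseteq> T - TK" using TKc by auto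
      hence "D \<inter> Inr ` Tp k = Y \<inter> Inr ` Tp k" by (auto simp: D_def W_def)
      thus "card (D \<inter> Inr ` Tp k) = b k" by (simp add: b_def)
    qed simp
    finally show ?thesis .
  qed
  have rkW: "card (T - TK) + submatrix_rank G SI TK \<le> M.rk W"
    unfolding W_def by (rule rk_lower[OF SIS TKT])
  have "W \<subseteq> Z \<union> D" using WE by (auto simp: D_def Y_def)
  hence "M.rk W \<le> M.rk (Z \<union> D)" by (rule M.rk_mono)
  moreover have "M.rk (Z \<union> D) + M.rk (Z \<inter> D) \<le> M.rk Z + M.rk D" by (rule M.rk_submod[OF Z DE])
  moreover have "M.rk D \<le> card D" by (rule M.rk_le_card[OF DE])
  ultimately have rkZ: "card (T - TK) + submatrix_rank G SI TK \<le> M.rk Z + card D" using rkW by linarith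
  have gS: "gS Y = (\<Sum>i\<in>I. a i) + (\<Sum>i\<in>{1..m} - I. s i)"
  proof -
    have "gS Y = (\<Sum>i\<in>{1..m}. min (a i) (s i))" by (simp add: gS_def a_def)
    also have "\<dots> = (\<Sum>i\<in>{1..m} - I. min (a i) (s i)) + (\<Sum>i\<in>I. min (a i) (s i))"
      using I by (intro sum.subset_diff) auto
    also have "(\<Sum>i\<in>{1..m} - I. min (a i) (s i)) = (\<Sum>i\<in>{1..m} - I. s i)"
      by (intro sum.cong) (auto simp: I_def)
    also have "(\<Sum>i\<in>I. min (a i) (s i)) = (\<Sum>i\<in>I. a i)"
      by (intro sum.cong) (auto simp: I_def)
    finally show ?thesis by simp
  qed
  have gT: "gT Y = (\<Sum>k\<in>K'. b k) + (\<Sum>k\<in>K. c k)"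
  proof -
    have "gT Y = (\<Sum>j\<in>{1..n}. min (b j) (c j))" by (simp add: gT_def b_def c_def)
    also have "\<dots> = (\<Sum>j\<in>{1..n} - K'. min (b j) (c j)) + (\<Sum>j\<in>K'. min (b j) (c j))"
      using K'n by (intro sum.subset_diff) auto
    also have "(\<Sum>j\<in>{1..n} - K'. min (b j) (c j)) = (\<Sum>j\<in>K. c j)"
      unfolding K_def by (intro sum.cong) (auto simp: K'_def)
    also have "(\<Sum>j\<in>K'. min (b j) (c j)) = (\<Sum>j\<in>K'. b j)"
      by (intro sum.cong) (auto simp: K'_def)
    finally show ?thesis by simp
  qed
  have h: "int (submatrix_rank G SI TK) \<ge> int (\<Sum>i\<in>I. s i) + int (\<Sum>k\<in>K. t k) - int R"
    using hyp[rule_format, OF I K] by (simp only: SI_def TK_def)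
  hence h': "(\<Sum>i\<in>I. s i) + (\<Sum>k\<in>K. t k) \<le> submatrix_rank G SI TK + R" by linarith
  have sR': "(\<Sum>i\<in>{1..m} - I. s i) + (\<Sum>i\<in>I. s i) = R"
    using sR I sum.subset_diff[of I "{1..m}" s] by simp
  have cK: "(\<Sum>k\<in>K. c k) + (\<Sum>k\<in>K. t k) = card TK"
  proof -
    have "(\<Sum>k\<in>K. c k) + (\<Sum>k\<in>K. t k) = (\<Sum>k\<in>K. c k + t k)" by (simp add: sum.distrib)
    also have "\<dots> = (\<Sum>k\<in>K. card (Tp k))"
      using t_le[OF hyp] K by (intro sum.cong) (auto simp: c_def)
    also have "\<dots> = card TK" unfolding TK_def using card_UT[OF K, of Tp] by simp
    finally show ?thesis .
  qed
  have cT: "card (T - TK) + card TK = card T" by (rule card_diff_add[OF TKT finT])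
  have "card T \<le> M.rk Z + (gS Y + gT Y)"
    using rkZ cD gS gT h' sR' cK cT by linarith
  thus "int (card T) \<le> ff Z + gg (EE - Z)"
    unfolding ff_def gg_def Y_def[symmetric] by linarith
qed

lemma suff:
  assumes hyp: "\<forall>I\<subseteq>{1..m}. \<forall>K\<subseteq>{1..n}.
        int (submatrix_rank G (\<Union>i\<in>I. Sp i) (\<Union>k\<in>K. Tp k))
          \<ge> int (\<Sum>i\<in>I. s i) + int (\<Sum>k\<in>K. t k) - int R"
  shows "\<exists>ss :: nat \<Rightarrow> 'r set. \<exists>tt :: nat \<Rightarrow> 'c set.
            (\<forall>i\<in>{1..m}. ss i \<subseteq> Sp i \<and> card (ss i) = s i) \<and>
            (\<forall>j\<in>{1..n}. tt j \<subseteq> Tp j \<and> card (tt j) = t j) \<and>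
            nonsingular_submatrix G (\<Union>i\<in>{1..m}. ss i) (\<Union>j\<in>{1..n}. tt j)"
proof -
  obtain X where X: "X \<subseteq> EE" "card X = card T" "ff X = int (card T)" "gg X = int (card T)"
    using intersection[OF finE good_ff good_gg cond[OF hyp]] by blast
  have "M.rk X = card X" using X by (simp add: ff_def)
  hence indX: "ind1 X" using M.ind_iff_rk[OF X(1)] by simp
  define a where "a i = card (X \<inter> Inl ` Sp i)" for i
  define b where "b j = card (X \<inter> Inr ` Tp j)" for j
  define c where "c j = card (Tp j) - t j" for j
  have tle: "\<forall>j\<in>{1..n}. t j \<le> card (Tp j)" using t_le[OF hyp] by blast
  have pX: "card X = (\<Sum>i\<in>{1..m}. a i) + (\<Sum>j\<in>{1..n}. b j)"
    using part_E[OF X(1)] by (simp add: a_def b_def)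
  have gS1: "gS X = (\<Sum>i\<in>{1..m}. min (a i) (s i))" by (simp add: gS_def a_def)
  have gT1: "gT X = (\<Sum>j\<in>{1..n}. min (b j) (c j))" by (simp add: gT_def b_def c_def)
  have le1: "gS X \<le> (\<Sum>i\<in>{1..m}. a i)" unfolding gS1 by (intro sum_mono) auto
  have le2: "gT X \<le> (\<Sum>j\<in>{1..n}. b j)" unfolding gT1 by (intro sum_mono) auto
  have "gS X + gT X = card X" using X by (simp add: gg_def)
  hence eq1: "gS X = (\<Sum>i\<in>{1..m}. a i)" and eq2: "gT X = (\<Sum>j\<in>{1..n}. b j)"
    using le1 le2 pX by linarith+
  have as: "a i \<le> s i" if "i \<in> {1..m}" for i
  proof -
    have "min (a i) (s i) = a i" using sum_mono_inv[of "\<lambda>i. min (a i) (s i)" "{1..m}" a i] eq1 gS1 that by auto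
    thus ?thesis by simp
  qed
  have bc: "b j \<le> c j" if "j \<in> {1..n}" for j
  proof -
    have "min (b j) (c j) = b j" using sum_mono_inv[of "\<lambda>j. min (b j) (c j)" "{1..n}" b j] eq2 gT1 that by auto
    thus ?thesis by simp
  qed
  have sa: "(\<Sum>i\<in>{1..m}. a i) \<le> (\<Sum>i\<in>{1..m}. s i)" using as by (intro sum_mono) auto
  have sb: "(\<Sum>j\<in>{1..n}. b j) \<le> (\<Sum>j\<in>{1..n}. c j)" using bc by (intro sum_mono) auto
  have cK: "(\<Sum>j\<in>{1..n}. c j) + (\<Sum>j\<in>{1..n}. t j) = card T"
  proof -
    have "(\<Sum>k\<in>{1..n}. c k) + (\<Sum>k\<in>{1..n}. t k) = (\<Sum>k\<in>{1..n}. c k + t k)" by (simp add: sum.distrib)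
    also have "\<dots> = (\<Sum>k\<in>{1..n}. card (Tp k))"
      using tle by (intro sum.cong) (auto simp: c_def)
    also have "\<dots> = card T" using card_UT[of "{1..n}" Tp] Tdef by simp
    finally show ?thesis .
  qed
  have sa2: "(\<Sum>i\<in>{1..m}. a i) = (\<Sum>i\<in>{1..m}. s i)" using sa sb cK pX X(2) sR tR by linarith
  have sb2: "(\<Sum>j\<in>{1..n}. b j) = (\<Sum>j\<in>{1..n}. c j)" using sa sb cK pX X(2) sR tR by linarith
  have aeq: "a i = s i" if "i \<in> {1..m}" for i using sum_mono_inv[OF sa2 as that] by simp
  have beq: "b j = c j" if "j \<in> {1..n}" for j using sum_mono_inv[OF sb2 bc that] by simp
  define ss where "ss i = {r \<in> Sp i. Inl r \<in> X}" for i
  define tt where "tt j = {x \<in> Tp j. Inr x \<notin> X}" for j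
  have ss1: "ss i \<subseteq> Sp i \<and> card (ss i) = s i" if i: "i \<in> {1..m}" for i
  proof -
    have "X \<inter> Inl ` Sp i = Inl ` ss i" by (auto simp: ss_def)
    hence "card (ss i) = a i" by (simp add: a_def card_image)
    thus ?thesis using aeq[OF i] by (auto simp: ss_def)
  qed
  have tt1: "tt j \<subseteq> Tp j \<and> card (tt j) = t j" if j: "j \<in> {1..n}" for j
  proof -
    define Q where "Q = {x \<in> Tp j. Inr x \<in> X}"
    have "X \<inter> Inr ` Tp j = Inr ` Q" by (auto simp: Q_def)
    hence cQ: "card Q = b j" by (simp add: b_def card_image)
    have "Tp j = tt j \<union> Q" "tt j \<inter> Q = {}" by (auto simp: tt_def Q_def)
    moreover have "finite (tt j)" "finite Q" using finTp[OF j] by (auto simp: tt_def Q_def)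
    ultimately have "card (Tp j) = card (tt j) + card Q" by (metis card_Un_disjoint)
    hence e: "card (Tp j) = card (tt j) + (card (Tp j) - t j)" using cQ beq[OF j] by (simp add: c_def)
    have "t j \<le> card (Tp j)" using tle j by blast
    hence "card (tt j) = t j" using e by arith
    thus ?thesis by (auto simp: tt_def)
  qed
  define A where "A = (\<Union>i\<in>{1..m}. ss i)"
  define B where "B = (\<Union>j\<in>{1..n}. tt j)"
  have AS: "A \<subseteq> S" using Sdef by (auto simp: A_def ss_def)
  have BT: "B \<subseteq> T" using Tdef by (auto simp: B_def tt_def)
  have XA: "Inl ` A \<union> Inr ` (T - B) = X"
  proof
    show "Inl ` A \<union> Inr ` (T - B) \<subseteq> X"
    proof
      fix x assume "x \<in> Inl ` A \<union> Inr ` (T - B)"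
      then consider (l) r where "x = Inl r" "r \<in> A" | (r) y where "x = Inr y" "y \<in> T" "y \<notin> B" by auto
      thus "x \<in> X"
      proof cases
        case l thus ?thesis by (auto simp: A_def ss_def)
      next
        case r
        then obtain j where j: "j \<in> {1..n}" "y \<in> Tp j" using Tdef by auto
        hence "y \<notin> tt j" using r by (auto simp: B_def)
        thus ?thesis using j r by (auto simp: tt_def)
      qed
    qed
    show "X \<subseteq> Inl ` A \<union> Inr ` (T - B)"
    proof
      fix x assume x: "x \<in> X"
      hence "x \<in> EE" using X by auto
      then consider (l) r where "x = Inl r" "r \<in> S" | (r) y where "x = Inr y" "y \<in> T" by auto
      thus "x \<in> Inl ` A \<union> Inr ` (T - B)"
      proof cases
        case l
        then obtain i where i: "i \<in> {1..m}" "r \<in> Sp i" using Sdef by auto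
        hence "r \<in> ss i" using l x by (simp add: ss_def)
        hence "r \<in> A" using i unfolding A_def by blast
        thus ?thesis using l by simp
      next
        case r
        have "y \<notin> B" using r x by (auto simp: B_def tt_def)
        thus ?thesis using r by auto
      qed
    qed
  qed
  have ri: "rows_lin_indep G A B" using char[OF AS BT] indX XA by simp
  have fA: "finite A" using AS finS by (rule finite_subset)
  have fB: "finite B" using BT finT by (rule finite_subset)
  have cA: "card A = R" unfolding A_def using card_US[of "{1..m}" ss] ss1 sR by simp
  have cB: "card B = R" unfolding B_def using card_UT[of "{1..n}" tt] tt1 tR by simp
  have "submatrix_rank G A B = card A"
  proof (rule antisym)
    obtain A' where "A' \<subseteq> A" "card A' = submatrix_rank G A B" using srank_ex[OF fA, of G B] by blast
    thus "submatrix_rank G A B \<le> card A" using fA card_mono by metis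
    show "card A \<le> submatrix_rank G A B" using srank_ge[OF fA order_refl ri] .
  qed
  hence "nonsingular_submatrix G A B" using fA fB cA cB by (simp add: nonsingular_submatrix_def)
  thus ?thesis using ss1 tt1 unfolding A_def B_def by blast
qed

end


theorem theorem1:
  fixes G :: "'r \<Rightarrow> 'c \<Rightarrow> 'a::field"
    and S :: "'r set" and T :: "'c set"
    and Sp :: "nat \<Rightarrow> 'r set" and Tp :: "nat \<Rightarrow> 'c set"
    and m n R :: nat and s t :: "nat \<Rightarrow> nat"
  assumes "finite S" and "finite T"
    and "S = (\<Union>i\<in>{1..m}. Sp i)" and "T = (\<Union>j\<in>{1..n}. Tp j)"
    and "\<forall>i\<in>{1..m}. \<forall>i'\<in>{1..m}. i \<noteq> i' \<longrightarrow> Sp i \<inter> Sp i' = {}"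
    and "\<forall>j\<in>{1..n}. \<forall>j'\<in>{1..n}. j \<noteq> j' \<longrightarrow> Tp j \<inter> Tp j' = {}"
    and "(\<Sum>i=1..m. s i) = R" and "(\<Sum>j=1..n. t j) = R"
  shows "(\<exists>ss :: nat \<Rightarrow> 'r set. \<exists>tt :: nat \<Rightarrow> 'c set.
            (\<forall>i\<in>{1..m}. ss i \<subseteq> Sp i \<and> card (ss i) = s i) \<and>
            (\<forall>j\<in>{1..n}. tt j \<subseteq> Tp j \<and> card (tt j) = t j) \<and>
            nonsingular_submatrix G (\<Union>i\<in>{1..m}. ss i) (\<Union>j\<in>{1..n}. tt j))
     \<longleftrightarrow>
     (\<forall>I\<subseteq>{1..m}. \<forall>K\<subseteq>{1..n}.
        int (submatrix_rank G (\<Union>i\<in>I. Sp i) (\<Union>k\<in>K. Tp k))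
          \<ge> int (\<Sum>i\<in>I. s i) + int (\<Sum>k\<in>K. t k) - int R)"
proof -
  interpret ctx G S T Sp Tp m n R s t
    using assms by unfold_locales auto
  show ?thesis
  proof
    assume "\<exists>ss :: nat \<Rightarrow> 'r set. \<exists>tt :: nat \<Rightarrow> 'c set.
            (\<forall>i\<in>{1..m}. ss i \<subseteq> Sp i \<and> card (ss i) = s i) \<and>
            (\<forall>j\<in>{1..n}. tt j \<subseteq> Tp j \<and> card (tt j) = t j) \<and>
            nonsingular_submatrix G (\<Union>i\<in>{1..m}. ss i) (\<Union>j\<in>{1..n}. tt j)"
    then obtain ss tt where h: "\<forall>i\<in>{1..m}. ss i \<subseteq> Sp i \<and> card (ss i) = s i"
      "\<forall>j\<in>{1..n}. tt j \<subseteq> Tp j \<and> card (tt j) = t j"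
      "nonsingular_submatrix G (\<Union>i\<in>{1..m}. ss i) (\<Union>j\<in>{1..n}. tt j)" by blast
    show "\<forall>I\<subseteq>{1..m}. \<forall>K\<subseteq>{1..n}.
        int (submatrix_rank G (\<Union>i\<in>I. Sp i) (\<Union>k\<in>K. Tp k))
          \<ge> int (\<Sum>i\<in>I. s i) + int (\<Sum>k\<in>K. t k) - int R"
      using nec[OF h] by blast
  next
    assume "\<forall>I\<subseteq>{1..m}. \<forall>K\<subseteq>{1..n}.
        int (submatrix_rank G (\<Union>i\<in>I. Sp i) (\<Union>k\<in>K. Tp k))
          \<ge> int (\<Sum>i\<in>I. s i) + int (\<Sum>k\<in>K. t k) - int R"
    thus "\<exists>ss :: nat \<Rightarrow> 'r set. \<exists>tt :: nat \<Rightarrow> 'c set.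
            (\<forall>i\<in>{1..m}. ss i \<subseteq> Sp i \<and> card (ss i) = s i) \<and>
            (\<forall>j\<in>{1..n}. tt j \<subseteq> Tp j \<and> card (tt j) = t j) \<and>
            nonsingular_submatrix G (\<Union>i\<in>{1..m}. ss i) (\<Union>j\<in>{1..n}. tt j)"
      by (rule suff)
  qed
qed

end
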